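(* For all $m\geq 1$ and $n\in\mathbb N$, \[ s_{n,m}(122,123)=\frac{1}{mn+1}\binom{(m+1)n}{n}. \]
   Context: $[n]_m=\{1^m,\ldots,n^m\}$; a permutation of $[n]_m$ is a sequence of length $nm$ in which each element of $[n]$ appears exactly $m$ times (for $n=0$ only the empty sequence). A sequence avoids a pattern $\pi$ if it has no subsequence order-isomorphic to $\pi$ (same relative order and same equalities among entries). $s_{n,m}(\Pi)$ is the number of permutations of $[n]_m$ avoiding all patterns in $\Pi$. *)

theory Defs
  imports Complex_Main "HOL-Library.Sublist"
begin

definition multiperm :: "nat \<Rightarrow> nat \<Rightarrow> nat list \<Rightarrow> bool" where
  "multiperm n m w \<longleftrightarrow> length w = n * m \<and> set w \<subseteq> {1..n} \<and>
     (\<forall>i\<in>{1..n}. count_list w i = m)"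

definition order_iso :: "nat list \<Rightarrow> nat list \<Rightarrow> bool" where
  "order_iso u p \<longleftrightarrow> length u = length p \<and>
     (\<forall>i<length u. \<forall>j<length u. (u!i < u!j \<longleftrightarrow> p!i < p!j) \<and> (u!i = u!j \<longleftrightarrow> p!i = p!j))"

definition contains_pat :: "nat list \<Rightarrow> nat list \<Rightarrow> bool" where
  "contains_pat w p \<longleftrightarrow> (\<exists>u. subseq u w \<and> order_iso u p)"

definition avoids_all :: "nat list \<Rightarrow> nat list set \<Rightarrow> bool" where
  "avoids_all w \<Pi> \<longleftrightarrow> (\<forall>p\<in>\<Pi>. \<not> contains_pat w p)"

definition s_count :: "nat \<Rightarrow> nat \<Rightarrow> nat list set \<Rightarrow> nat" where
  "s_count n m \<Pi> = card {w. multiperm n m w \<and> avoids_all w \<Pi>}"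

end

theory Submission
  imports Defs
begin

lemma len3: "length u = 3 \<Longrightarrow> \<exists>a b c. u=[a,b,c]"
  by (simp add: numeral_3_eq_3 length_Suc_conv) blast
lemma oi_abc: "order_iso [a,b,c] [1,2,2] \<longleftrightarrow> a < b \<and> b = c"
  unfolding order_iso_def by (simp add: All_less_Suc numeral_3_eq_3) arith
lemma oi_abc2: "order_iso [a,b,c] [1,2,3] \<longleftrightarrow> a < b \<and> b < c"
  unfolding order_iso_def by (simp add: All_less_Suc numeral_3_eq_3) arith
lemma oi3: "order_iso u [1,2,2] \<longleftrightarrow> (\<exists>a b c. u = [a,b,c] \<and> a < b \<and> b = c)"
       "order_iso u [1,2,3] \<longleftrightarrow> (\<exists>a b c. u = [a,b,c] \<and> a < b \<and> b < c)"
proof -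
  have "order_iso u p \<Longrightarrow> length p = 3 \<Longrightarrow> \<exists>a b c. u=[a,b,c]" for p
    using len3 unfolding order_iso_def by auto
  then show "order_iso u [1,2,2] \<longleftrightarrow> (\<exists>a b c. u = [a,b,c] \<and> a < b \<and> b = c)"
       "order_iso u [1,2,3] \<longleftrightarrow> (\<exists>a b c. u = [a,b,c] \<and> a < b \<and> b < c)"
    using oi_abc oi_abc2 by (metis length_Cons list.size(3) numeral_3_eq_3)+
qed
definition bad :: "nat list \<Rightarrow> bool" where
  "bad w \<longleftrightarrow> (\<exists>a b c. subseq [a,b,c] w \<and> a < b \<and> b \<le> c)"

lemma avoids_bad: "avoids_all w {[1,2,2],[1,2,3]} \<longleftrightarrow> \<not> bad w"
proof -
  have 1: "contains_pat w [1,2,2] \<longleftrightarrow> (\<exists>a b c. subseq [a,b,c] w \<and> a < b \<and> b = c)"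
    unfolding contains_pat_def oi3(1) by auto
  have 2: "contains_pat w [1,2,3] \<longleftrightarrow> (\<exists>a b c. subseq [a,b,c] w \<and> a < b \<and> b < c)"
    unfolding contains_pat_def oi3(2) by auto
  have 3: "bad w \<longleftrightarrow> contains_pat w [1,2,2] \<or> contains_pat w [1,2,3]"
    unfolding bad_def 1 2
  proof
    assume "\<exists>a b c. subseq [a, b, c] w \<and> a < b \<and> b \<le> c"
    then obtain a b c where "subseq [a, b, c] w" "a < b" "b \<le> c" by blast
    then show "(\<exists>a b c. subseq [a, b, c] w \<and> a < b \<and> b = c) \<or> (\<exists>a b c. subseq [a, b, c] w \<and> a < b \<and> b < c)"
    proof (cases "b = c")
      case True then show ?thesis using \<open>subseq [a, b, c] w\<close> \<open>a < b\<close> by (intro disjI1 exI[of _ a] exI[of _ b] exI[of _ c]) simp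
    next
      case False then show ?thesis using \<open>subseq [a, b, c] w\<close> \<open>a < b\<close> \<open>b \<le> c\<close> by (intro disjI2 exI[of _ a] exI[of _ b] exI[of _ c]) simp
    qed
  next
    assume "(\<exists>a b c. subseq [a, b, c] w \<and> a < b \<and> b = c) \<or> (\<exists>a b c. subseq [a, b, c] w \<and> a < b \<and> b < c)"
    then show "\<exists>a b c. subseq [a, b, c] w \<and> a < b \<and> b \<le> c"
    proof
      assume "\<exists>a b c. subseq [a, b, c] w \<and> a < b \<and> b = c"
      then obtain a b c where "subseq [a, b, c] w" "a < b" "b = c" by blast
      then show ?thesis by (intro exI[of _ a] exI[of _ b] exI[of _ c]) simp
    next
      assume "\<exists>a b c. subseq [a, b, c] w \<and> a < b \<and> b < c"
      then obtain a b c where "subseq [a, b, c] w" "a < b" "b < c" by blast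
      then show ?thesis by (intro exI[of _ a] exI[of _ b] exI[of _ c]) simp
    qed
  qed
  show ?thesis unfolding avoids_all_def 3 by simp
qed

fun good :: "nat list \<Rightarrow> bool" where
  "good [] = True"
| "good (x#xs) = (sorted_wrt (>) (filter (\<lambda>y. x < y) xs) \<and> good xs)"

lemma t1: fixes y :: nat shows "b \<noteq> y \<Longrightarrow> subseq [b,c] (y#ys) \<longleftrightarrow> subseq [b,c] ys"
  by (simp only: subseq_Cons2_iff if_False)
lemma t2: fixes y :: nat shows "subseq [y,c] (y#ys) \<longleftrightarrow> c \<in> set ys"
  by (simp only: subseq_Cons2_iff simp_thms if_True subseq_singleton_left)
lemma t3: "subseq (x#xs) ys \<Longrightarrow> subseq xs ys" by (rule subseq_Cons')
lemma subseq2_Cons: fixes y :: nat shows "subseq [b,c] (y#ys) \<longleftrightarrow> subseq [b,c] ys \<or> (b = y \<and> c \<in> set ys)"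
proof (cases "b = y")
  case True
  have "subseq [b,c] ys \<Longrightarrow> c \<in> set ys" using t3[of b "[c]" ys] subseq_singleton_left[of c ys] by blast
  then show ?thesis using True t2 by blast
next
  case False
  then show ?thesis using t1 by blast
qed
lemma t4: fixes y :: nat shows "a \<noteq> y \<Longrightarrow> subseq [a,b,c] (y#ys) \<longleftrightarrow> subseq [a,b,c] ys"
  by (simp only: subseq_Cons2_iff if_False)
lemma t5: fixes y :: nat shows "subseq [y,b,c] (y#ys) \<longleftrightarrow> subseq [b,c] ys"
  by (simp only: subseq_Cons2_iff simp_thms if_True)
lemma subseq3_Cons: fixes y :: nat shows "subseq [a,b,c] (y#ys) \<longleftrightarrow> subseq [a,b,c] ys \<or> (a = y \<and> subseq [b,c] ys)"
proof (cases "a = y")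
  case True
  have "subseq [a,b,c] ys \<Longrightarrow> subseq [b,c] ys" using t3[of a "[b,c]" ys] by blast
  then show ?thesis using True t5 by blast
next
  case False
  then show ?thesis using t4 by blast
qed
lemma E_Cons: fixes x :: nat shows "(\<exists>b c. subseq [b,c] (y#ys) \<and> x < b \<and> b \<le> c) \<longleftrightarrow>
   (\<exists>b c. subseq [b,c] ys \<and> x < b \<and> b \<le> c) \<or> (x < y \<and> (\<exists>c\<in>set ys. y \<le> c))"
  unfolding subseq2_Cons by blast
lemma pair_lemma: fixes x :: nat shows "(\<exists>b c. subseq [b,c] xs \<and> x < b \<and> b \<le> c) \<longleftrightarrow> \<not> sorted_wrt (>) (filter (\<lambda>y. x < y) xs)"
proof (induction xs)
  case Nil then show ?case by simp
next
  case (Cons y ys)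
  have S: "sorted_wrt (>) (filter (\<lambda>y. x < y) (y#ys)) \<longleftrightarrow> sorted_wrt (>) (filter (\<lambda>y. x < y) ys) \<and> (x < y \<longrightarrow> (\<forall>z\<in>set ys. x < z \<longrightarrow> z < y))"
    by auto
  show ?case unfolding E_Cons Cons.IH S by (auto simp: not_less intro: less_le_trans)
qed

lemma bad_good: "bad w \<longleftrightarrow> \<not> good w"
proof (induction w)
  case Nil then show ?case by (simp add: bad_def)
next
  case (Cons y ys)
  have "bad (y#ys) \<longleftrightarrow> bad ys \<or> (\<exists>b c. subseq [b,c] ys \<and> y < b \<and> b \<le> c)"
    unfolding bad_def subseq3_Cons by blast
  then show ?case using Cons.IH pair_lemma[of ys y] by (simp only: good.simps) blast
qed

lemma avoids_good: "avoids_all w {[1,2,2],[1,2,3]} \<longleftrightarrow> good w"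
  using avoids_bad bad_good by simp

lemma filt_big: fixes c :: nat shows "\<forall>x\<in>set zs. x \<le> c \<Longrightarrow> filter ((<) c) zs = []"
  by (simp add: filter_False not_less)

lemma good_Cons_big: "\<forall>x\<in>set zs. x \<le> c \<Longrightarrow> good (c # zs) = good zs"
  by (simp add: filter_False not_less)

lemma good_repl: "\<forall>x\<in>set ys. x \<le> c \<Longrightarrow> good (replicate r c @ ys) = good ys"
  by (induction r) (auto simp: filt_big)

lemma good_ins: "sorted_wrt (\<ge>) X \<Longrightarrow> \<forall>x\<in>set (X@Y). x < c \<Longrightarrow> good (X@Y) \<Longrightarrow> good (X @ c # Y)"
proof (induction X)
  case Nil then show ?case by (simp add: filt_big less_imp_le)
next
  case (Cons x X')
  have a: "\<forall>z\<in>set X'. z \<le> x" "sorted_wrt (\<ge>) X'" using Cons.prems(1) by auto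
  have f1: "filter (\<lambda>y. x < y) X' = []" using a(1) by (simp add: filter_False not_less)
  have xc: "x < c" using Cons.prems(2) by simp
  have g: "sorted_wrt (>) (filter (\<lambda>y. x < y) Y)" "good (X'@Y)" using Cons.prems(3) f1 by auto
  have "good (X' @ c # Y)" using Cons.IH a(2) Cons.prems(2) g(2) by simp
  moreover have "sorted_wrt (>) (filter (\<lambda>y. x < y) (X' @ c # Y))"
    using f1 xc g(1) Cons.prems(2) by auto
  ultimately show ?case by simp
qed

lemma good_ins_rev: "\<forall>x\<in>set (X@Y). x < c \<Longrightarrow> good (X @ c # Y) \<Longrightarrow> sorted_wrt (\<ge>) X \<and> good (X@Y)"
proof (induction X)
  case Nil then show ?case by simp
next
  case (Cons x X')
  have xc: "x < c" using Cons.prems(1) by simp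
  have s: "sorted_wrt (>) (filter (\<lambda>y. x < y) X' @ c # filter (\<lambda>y. x < y) Y)" and g: "good (X' @ c # Y)"
    using Cons.prems(2) xc by auto
  have f1: "filter (\<lambda>y. x < y) X' = []"
  proof (rule ccontr)
    assume "filter (\<lambda>y. x < y) X' \<noteq> []"
    then obtain z where "z \<in> set (filter (\<lambda>y. x < y) X')" by (metis ex_in_conv set_empty)
    then have "z > c" using s by (auto simp: sorted_wrt_append)
    moreover have "z < c" using \<open>z \<in> set (filter (\<lambda>y. x < y) X')\<close> Cons.prems(1) by auto
    ultimately show False by simp
  qed
  have a: "\<forall>z\<in>set X'. z \<le> x" using f1 by (auto simp: filter_empty_conv)
  have IH: "sorted_wrt (\<ge>) X' \<and> good (X'@Y)" using Cons.IH Cons.prems(1) g by simp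
  have "sorted_wrt (>) (filter (\<lambda>y. x < y) Y)" using s f1 by simp
  then show ?case using IH a f1 by simp
qed

lemma count_sorted_gt: "sorted_wrt (>) xs \<Longrightarrow> count_list xs (c::nat) \<le> 1"
proof (induction xs)
  case Nil then show ?case by simp
next
  case (Cons x xs)
  then show ?case by (auto simp: count_list_0_iff)
qed

lemma count_filter: "P c \<Longrightarrow> count_list (filter P l) c = count_list l c"
  by (induction l) auto

fun dp :: "nat list \<Rightarrow> nat" where
  "dp [] = 0"
| "dp [x] = 1"
| "dp (x#y#xs) = (if y \<le> x then Suc (dp (y#xs)) else 1)"

lemma dp_le: "dp w \<le> length w"
  by (induction w rule: dp.induct) auto

lemma dp_take: "j \<le> dp w \<longleftrightarrow> j \<le> length w \<and> sorted_wrt (\<ge>) (take j w)"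
proof (induction w arbitrary: j rule: dp.induct)
  case 1 then show ?case by simp
next
  case (2 x) then show ?case by (cases j) auto
next
  case (3 x y xs)
  show ?case
  proof (cases "y \<le> x")
    case True
    show ?thesis
    proof (cases j)
      case 0 then show ?thesis by simp
    next
      case (Suc j')
      have B: "sorted_wrt (\<ge>) (take j' (y#xs)) \<Longrightarrow> \<forall>z\<in>set (take j' (y#xs)). z \<le> x"
      proof (cases j')
        case 0 then show ?thesis by simp
      next
        case (Suc j'')
        then have "take j' (y#xs) = y # take j'' xs" by simp
        then show "sorted_wrt (\<ge>) (take j' (y#xs)) \<Longrightarrow> \<forall>z\<in>set (take j' (y#xs)). z \<le> x"
          using True by auto
      qed
      have I: "j' \<le> dp (y#xs) \<longleftrightarrow> j' \<le> length (y#xs) \<and> sorted_wrt (\<ge>) (take j' (y#xs))"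
        using "3.IH"[OF True] by blast
      have E1: "(j \<le> dp (x#y#xs)) = (j' \<le> dp (y#xs))" using True Suc by simp
      have E2: "sorted_wrt (\<ge>) (take j (x#y#xs)) = ((\<forall>z\<in>set (take j' (y#xs)). z \<le> x) \<and> sorted_wrt (\<ge>) (take j' (y#xs)))"
        using Suc by simp
      have E3: "(j \<le> length (x#y#xs)) = (j' \<le> length (y#xs))" using Suc by simp
      show ?thesis unfolding E1 E2 E3 I using B by blast
    qed
  next
    case False
    show ?thesis
    proof
      assume "j \<le> dp (x#y#xs)"
      then have "j \<le> 1" using False by simp
      then show "j \<le> length (x#y#xs) \<and> sorted_wrt (\<ge>) (take j (x#y#xs))"
        by (cases j) auto
    next
      assume a: "j \<le> length (x#y#xs) \<and> sorted_wrt (\<ge>) (take j (x#y#xs))"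
      have "j \<le> 1"
      proof (rule ccontr)
        assume "\<not> j \<le> 1"
        then have "\<exists>j'. j = Suc (Suc j')" by presburger
        then obtain j' where "j = Suc (Suc j')" by blast
        then show False using a False by auto
      qed
      then show "j \<le> dp (x#y#xs)" using False by simp
    qed
  qed
qed

lemma dp_Cons_big: "\<forall>x\<in>set w. x \<le> c \<Longrightarrow> dp (c#w) = Suc (dp w)"
  by (cases w) auto

lemma dp_repl: "\<forall>x\<in>set w. x \<le> c \<Longrightarrow> dp (replicate r c @ w) = r + dp w"
proof (induction r)
  case 0 then show ?case by simp
next
  case (Suc r)
  have h: "\<forall>x\<in>set (replicate r c @ w). x \<le> c" using Suc.prems by auto
  show ?case using dp_Cons_big[OF h] Suc by simp
qed

lemma dp_ins: "X \<noteq> [] \<Longrightarrow> sorted_wrt (\<ge>) X \<Longrightarrow> \<forall>x\<in>set X. x < c \<Longrightarrow> dp (X @ c # Y) = length X"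
proof (induction X)
  case Nil then show ?case by simp
next
  case (Cons x X')
  show ?case
  proof (cases X')
    case Nil then show ?thesis using Cons.prems by simp
  next
    case (Cons x' X'')
    then show ?thesis using Cons.prems Cons.IH by auto
  qed
qed

lemma count_repl: "count_list (replicate r c) i = (if c = i then r else 0)"
  by (induction r) auto

lemma mp_split:
  assumes m: "m \<ge> 1" and cX: "Suc n \<notin> set X" and cY: "Suc n \<notin> set Y"
  shows "multiperm (Suc n) m (replicate (m-1) (Suc n) @ X @ Suc n # Y) \<longleftrightarrow> multiperm n m (X@Y)"
proof -
  have L: "length (replicate (m-1) (Suc n) @ X @ Suc n # Y) = Suc n * m \<longleftrightarrow> length (X@Y) = n * m"
    using m by auto
  have S: "set (replicate (m-1) (Suc n) @ X @ Suc n # Y) \<subseteq> {1..Suc n} \<longleftrightarrow> set (X@Y) \<subseteq> {1..n}"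
  proof
    assume a: "set (replicate (m-1) (Suc n) @ X @ Suc n # Y) \<subseteq> {1..Suc n}"
    show "set (X@Y) \<subseteq> {1..n}"
    proof
      fix x assume x: "x \<in> set (X@Y)"
      then have "x \<in> set (replicate (m-1) (Suc n) @ X @ Suc n # Y)" by auto
      then have "x \<in> {1..Suc n}" using a by blast
      moreover have "x \<noteq> Suc n" using x cX cY by auto
      ultimately show "x \<in> {1..n}" by auto
    qed
  next
    assume a: "set (X@Y) \<subseteq> {1..n}"
    show "set (replicate (m-1) (Suc n) @ X @ Suc n # Y) \<subseteq> {1..Suc n}"
    proof
      fix x assume x: "x \<in> set (replicate (m-1) (Suc n) @ X @ Suc n # Y)"
      show "x \<in> {1..Suc n}"
      proof (cases "x = Suc n")
        case True then show ?thesis by simp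
      next
        case False then have "x \<in> set (X@Y)" using x by (auto split: if_splits)
        then show ?thesis using a by auto
      qed
    qed
  qed
  have C0: "count_list (replicate (m-1) (Suc n) @ X @ Suc n # Y) (Suc n) = m"
    using m cX cY by (simp add: count_repl count_list_0_iff[symmetric])
  have C1: "i \<in> {1..n} \<Longrightarrow> count_list (replicate (m-1) (Suc n) @ X @ Suc n # Y) i = count_list (X@Y) i" for i
    by (auto simp: count_repl)
  have C: "(\<forall>i\<in>{1..Suc n}. count_list (replicate (m-1) (Suc n) @ X @ Suc n # Y) i = m) \<longleftrightarrow>
           (\<forall>i\<in>{1..n}. count_list (X@Y) i = m)"
  proof
    assume a: "\<forall>i\<in>{1..Suc n}. count_list (replicate (m-1) (Suc n) @ X @ Suc n # Y) i = m"
    show "\<forall>i\<in>{1..n}. count_list (X@Y) i = m"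
    proof
      fix i assume i: "i \<in> {1..n}"
      then have "i \<in> {1..Suc n}" by auto
      then have "count_list (replicate (m-1) (Suc n) @ X @ Suc n # Y) i = m" using a by blast
      then show "count_list (X@Y) i = m" using C1[OF i] by simp
    qed
  next
    assume a: "\<forall>i\<in>{1..n}. count_list (X@Y) i = m"
    show "\<forall>i\<in>{1..Suc n}. count_list (replicate (m-1) (Suc n) @ X @ Suc n # Y) i = m"
    proof
      fix i assume i: "i \<in> {1..Suc n}"
      show "count_list (replicate (m-1) (Suc n) @ X @ Suc n # Y) i = m"
      proof (cases "i = Suc n")
        case True then show ?thesis using C0 by simp
      next
        case False then have "i \<in> {1..n}" using i by auto
        then show ?thesis using a C1[of i] by simp
      qed
    qed
  qed
  show ?thesis unfolding multiperm_def L S C ..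
qed

definition W :: "nat \<Rightarrow> nat \<Rightarrow> nat list set" where
  "W m n = {w. multiperm n m w \<and> good w}"

definition ins :: "nat \<Rightarrow> nat \<Rightarrow> nat list \<times> nat \<Rightarrow> nat list" where
  "ins m c p = replicate (m-1) c @ take (snd p) (fst p) @ c # drop (snd p) (fst p)"

lemma W_lt: "w \<in> W m n \<Longrightarrow> \<forall>x\<in>set w. x < Suc n"
  unfolding W_def multiperm_def by auto

lemma ins_mem:
  assumes m: "m \<ge> 1" and w: "w \<in> W m n" and j: "j \<le> dp w"
  shows "ins m (Suc n) (w,j) \<in> W m (Suc n)"
proof -
  define X where "X = take j w"
  define Y where "Y = drop j w"
  have XY: "X @ Y = w" unfolding X_def Y_def by simp
  have lt: "\<forall>x\<in>set (X@Y). x < Suc n" using W_lt[OF w] XY by simp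
  then have cX: "Suc n \<notin> set X" and cY: "Suc n \<notin> set Y" by auto
  have sX: "sorted_wrt (\<ge>) X" using j dp_take unfolding X_def by blast
  have mp: "multiperm n m (X@Y)" using w XY unfolding W_def by simp
  have g: "good (X@Y)" using w XY unfolding W_def by simp
  have g2: "good (X @ Suc n # Y)" using good_ins[OF sX lt g] .
  have le: "\<forall>x\<in>set (X @ Suc n # Y). x \<le> Suc n" using lt by (auto intro: less_imp_le)
  have "good (replicate (m-1) (Suc n) @ X @ Suc n # Y)" using good_repl[OF le] g2 by simp
  moreover have "multiperm (Suc n) m (replicate (m-1) (Suc n) @ X @ Suc n # Y)"
    using mp_split[OF m cX cY] mp by simp
  ultimately show ?thesis unfolding W_def ins_def X_def Y_def by simp
qed

lemma ins_dp:
  assumes m: "m \<ge> 1" and w: "w \<in> W m n" and j: "j \<le> dp w"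
  shows "dp (ins m (Suc n) (w,j)) = (if j = 0 then m + dp w else m - 1 + j)"
proof -
  define X where "X = take j w"
  define Y where "Y = drop j w"
  have XY: "X @ Y = w" unfolding X_def Y_def by simp
  have lt: "\<forall>x\<in>set (X@Y). x < Suc n" using W_lt[OF w] XY by simp
  have le: "\<forall>x\<in>set (X @ Suc n # Y). x \<le> Suc n" using lt by (auto intro: less_imp_le)
  have sX: "sorted_wrt (\<ge>) X" using j dp_take unfolding X_def by blast
  have jl: "j \<le> length w" using j dp_le le_trans by blast
  have "dp (ins m (Suc n) (w,j)) = m - 1 + dp (X @ Suc n # Y)"
    unfolding ins_def X_def Y_def using dp_repl le unfolding X_def Y_def by simp
  also have "\<dots> = (if j = 0 then m + dp w else m - 1 + j)"
  proof (cases "j = 0")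
    case True
    then have "X = []" "Y = w" unfolding X_def Y_def by auto
    then have "dp (X @ Suc n # Y) = Suc (dp w)" using dp_Cons_big lt by (simp add: less_imp_le)
    then show ?thesis using True m by simp
  next
    case False
    then have "X \<noteq> []" using jl unfolding X_def by auto
    moreover have "length X = j" using jl unfolding X_def by simp
    moreover have "\<forall>x\<in>set X. x < Suc n" using lt by auto
    ultimately have "dp (X @ Suc n # Y) = j" using dp_ins[OF _ sX] by metis
    then show ?thesis using False by simp
  qed
  finally show ?thesis .
qed

lemma ins_inj: "inj_on (ins m (Suc n)) (Sigma (W m n) (\<lambda>w. {0..dp w}))"
proof (rule inj_onI)
  fix p q assume p: "p \<in> Sigma (W m n) (\<lambda>w. {0..dp w})" and q: "q \<in> Sigma (W m n) (\<lambda>w. {0..dp w})"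
    and e: "ins m (Suc n) p = ins m (Suc n) q"
  obtain w1 j1 where p': "p = (w1,j1)" by (cases p)
  obtain w2 j2 where q': "q = (w2,j2)" by (cases q)
  have w1: "w1 \<in> W m n" "j1 \<le> dp w1" using p p' by auto
  have w2: "w2 \<in> W m n" "j2 \<le> dp w2" using q q' by auto
  have j1: "j1 \<le> length w1" using w1(2) dp_le le_trans by blast
  have j2: "j2 \<le> length w2" using w2(2) dp_le le_trans by blast
  have n1: "Suc n \<notin> set (take j1 w1)" "Suc n \<notin> set (drop j1 w1)"
    using W_lt[OF w1(1)] by (auto dest: in_set_takeD in_set_dropD)
  have n2: "Suc n \<notin> set (take j2 w2)" "Suc n \<notin> set (drop j2 w2)"
    using W_lt[OF w2(1)] by (auto dest: in_set_takeD in_set_dropD)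
  from e have "take j1 w1 @ Suc n # drop j1 w1 = take j2 w2 @ Suc n # drop j2 w2"
    unfolding ins_def p' q' by simp
  then have "take j1 w1 = take j2 w2 \<and> drop j1 w1 = drop j2 w2"
    using append_Cons_eq_iff[OF n1] by blast
  then have "j1 = j2" "w1 = w2"
    using j1 j2 by (metis length_take min.absorb2, metis append_take_drop_id)
  then show "p = q" using p' q' by simp
qed

lemma lead_split: "\<exists>k u. v = replicate k c @ u \<and> (u = [] \<or> hd u \<noteq> c)"
proof (induction v)
  case Nil then show ?case by (intro exI[of _ 0] exI[of _ "[]"]) simp
next
  case (Cons x v)
  show ?case
  proof (cases "x = c")
    case True
    then obtain k u where "v = replicate k c @ u" "u = [] \<or> hd u \<noteq> c" using Cons.IH by blast
    then show ?thesis using True by (intro exI[of _ "Suc k"] exI[of _ u]) simp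
  next
    case False
    then show ?thesis by (intro exI[of _ 0] exI[of _ "x#v"]) simp
  qed
qed

lemma ins_surj:
  assumes m: "m \<ge> 1" and v: "v \<in> W m (Suc n)"
  shows "v \<in> ins m (Suc n) ` Sigma (W m n) (\<lambda>w. {0..dp w})"
proof -
  define c where "c = Suc n"
  obtain k u where vu: "v = replicate k c @ u" and hu: "u = [] \<or> hd u \<noteq> c" using lead_split[of v c] by blast
  have mpv: "multiperm (Suc n) m v" and gv: "good v" using v unfolding W_def by simp_all
  have sv: "set v \<subseteq> {1..Suc n}" using mpv unfolding multiperm_def by simp
  have le: "\<forall>x\<in>set v. x \<le> c"
  proof
    fix x assume "x \<in> set v" then have "x \<in> {1..Suc n}" using sv by blast
    then show "x \<le> c" unfolding c_def by simp
  qed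
  then have leu: "\<forall>x\<in>set u. x \<le> c" using vu by simp
  have gu: "good u" using gv good_repl[OF leu] vu by simp
  have "\<forall>i\<in>{1..Suc n}. count_list v i = m" using mpv unfolding multiperm_def by simp
  moreover have "c \<in> {1..Suc n}" unfolding c_def by simp
  ultimately have cnt: "count_list v c = m" by blast
  then have cnt2: "k + count_list u c = m" using vu by (simp add: count_repl)
  show ?thesis
  proof (cases "c \<in> set u")
    case False
    then have k: "k = m" using cnt2 by (simp add: count_list_0_iff[symmetric])
    obtain m' where m': "m = Suc m'" using m by (cases m) auto
    have eq: "v = replicate (m-1) c @ [] @ c # u" using vu k m' by (simp add: replicate_app_Cons_same)
    have "multiperm n m ([] @ u)" using mp_split[where X="[]" and Y=u and n=n] m False mpv eq c_def by simp
    then have uW: "u \<in> W m n" unfolding W_def using gu by simp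
    have "v = ins m (Suc n) (u, 0)" unfolding ins_def using eq c_def by simp
    moreover have "(u, 0) \<in> Sigma (W m n) (\<lambda>w. {0..dp w})" using uW by simp
    ultimately show ?thesis by (rule rev_image_eqI[rotated])
  next
    case True
    then obtain X Y where uXY: "u = X @ c # Y" and cX: "c \<notin> set X" by (meson split_list_first)
    have Xne: "X \<noteq> []" using hu uXY by auto
    then obtain x X' where X: "X = x # X'" by (cases X) auto
    have xc: "x < c" using leu uXY X cX by auto
    have "sorted_wrt (>) (filter (\<lambda>y. x < y) (X' @ c # Y))" using gu uXY X by simp
    then have "count_list (filter (\<lambda>y. x < y) (X' @ c # Y)) c \<le> 1" by (rule count_sorted_gt)
    then have "count_list (X' @ c # Y) c \<le> 1" using count_filter[of "\<lambda>y. x < y" c] xc by simp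
    then have cY0: "count_list Y c = 0" by simp
    then have cY: "c \<notin> set Y" by (simp add: count_list_0_iff)
    have cX0: "count_list X c = 0" using cX by (simp add: count_list_0_iff)
    have k: "k = m - 1" using cnt2 uXY cX0 cY0 by simp
    have eq: "v = replicate (m-1) c @ X @ c # Y" using vu uXY k by simp
    have lt: "\<forall>x\<in>set (X@Y). x < c"
    proof
      fix z assume z: "z \<in> set (X@Y)"
      then have "z \<le> c" using leu uXY by auto
      moreover have "z \<noteq> c" using z cX cY by auto
      ultimately show "z < c" by simp
    qed
    have gXcY: "good (X @ c # Y)" using gu uXY by simp
    have sX: "sorted_wrt (\<ge>) X" and gXY: "good (X@Y)" using good_ins_rev[OF lt gXcY] by auto
    have "multiperm n m (X @ Y)" using mp_split[where X=X and Y=Y and n=n] m cX cY mpv eq c_def by simp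
    then have W': "X @ Y \<in> W m n" unfolding W_def using gXY by simp
    have tk: "take (length X) (X@Y) = X" "drop (length X) (X@Y) = Y" by simp_all
    have "length X \<le> dp (X@Y)" using dp_take[of "length X" "X@Y"] sX by simp
    moreover have "v = ins m (Suc n) (X @ Y, length X)" unfolding ins_def using eq c_def tk by simp
    moreover have "(X @ Y, length X) \<in> Sigma (W m n) (\<lambda>w. {0..dp w})" using W' calculation(1) by simp
    ultimately show ?thesis by (intro rev_image_eqI[of "(X @ Y, length X)"]) simp_all
  qed
qed

fun T :: "nat \<Rightarrow> nat \<Rightarrow> nat \<Rightarrow> nat" where
  "T m 0 L = 1"
| "T m (Suc k) L = (\<Sum>i\<le>L. T m k (m+i))"

lemma W_finite: "finite (W m n)"
proof (rule finite_subset)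
  show "W m n \<subseteq> {xs. set xs \<subseteq> {1..n} \<and> length xs = n*m}" unfolding W_def multiperm_def by blast
  show "finite {xs. set xs \<subseteq> {1..n} \<and> length xs = n*m}" by (rule finite_lists_length_eq) simp
qed

lemma W0: "W m 0 = {[]}"
  unfolding W_def multiperm_def by auto

lemma W_Suc: "m \<ge> 1 \<Longrightarrow> W m (Suc n) = ins m (Suc n) ` Sigma (W m n) (\<lambda>w. {0..dp w})"
proof
  assume m: "m \<ge> 1"
  show "W m (Suc n) \<subseteq> ins m (Suc n) ` Sigma (W m n) (\<lambda>w. {0..dp w})"
    using ins_surj[OF m] by blast
  show "ins m (Suc n) ` Sigma (W m n) (\<lambda>w. {0..dp w}) \<subseteq> W m (Suc n)"
  proof
    fix v assume "v \<in> ins m (Suc n) ` Sigma (W m n) (\<lambda>w. {0..dp w})"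
    then obtain w j where "w \<in> W m n" "j \<le> dp w" "v = ins m (Suc n) (w,j)" by auto
    then show "v \<in> W m (Suc n)" using ins_mem[OF m] by simp
  qed
qed

lemma shift_sum: fixes m L :: nat and f :: "nat \<Rightarrow> nat" shows "m \<ge> 1 \<Longrightarrow> (\<Sum>j\<in>{1..L}. f (m - 1 + j)) = (\<Sum>i<L. f (m + i))"
proof (induction L)
  case 0 then show ?case by simp
next
  case (Suc L)
  have "{1..Suc L} = insert (Suc L) {1..L}" by auto
  then have "(\<Sum>j\<in>{1..Suc L}. f (m - 1 + j)) = f (m - 1 + Suc L) + (\<Sum>j\<in>{1..L}. f (m - 1 + j))" by simp
  also have "\<dots> = f (m + L) + (\<Sum>i<L. f (m + i))" using Suc by simp
  finally show ?case by simp
qed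

lemma inner: fixes m L :: nat and f :: "nat \<Rightarrow> nat" shows "m \<ge> 1 \<Longrightarrow> (\<Sum>j\<in>{0..L}. if j = 0 then f (m+L) else f (m-1+j)) = (\<Sum>i\<le>L. f (m+i))"
proof -
  assume m: "m \<ge> 1"
  have "{0..L} = insert 0 {1..L}" by (auto simp: not_less_eq_eq)
  then have "(\<Sum>j\<in>{0..L}. if j = 0 then f (m+L) else f (m-1+j)) = f (m+L) + (\<Sum>j\<in>{1..L}. if j = 0 then f (m+L) else f (m-1+j))"
    by simp
  also have "(\<Sum>j\<in>{1..L}. if j = 0 then f (m+L) else f (m-1+j)) = (\<Sum>j\<in>{1..L}. f (m-1+j))"
    by (rule sum.cong) auto
  also have "\<dots> = (\<Sum>i<L. f (m + i))" using shift_sum[OF m] .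
  also have "f (m+L) + (\<Sum>i<L. f (m + i)) = (\<Sum>i\<le>L. f (m+i))"
    by (simp add: lessThan_Suc_atMost[symmetric])
  finally show ?thesis .
qed

lemma main: "m \<ge> 1 \<Longrightarrow> (\<Sum>w\<in>W m n. T m k (dp w)) = T m (n+k) 0"
proof (induction n arbitrary: k)
  case 0 then show ?case by (simp add: W0)
next
  case (Suc n)
  have m: "m \<ge> 1" by fact
  have "(\<Sum>w\<in>W m (Suc n). T m k (dp w)) = (\<Sum>p\<in>Sigma (W m n) (\<lambda>w. {0..dp w}). T m k (dp (ins m (Suc n) p)))"
    unfolding W_Suc[OF m] by (subst sum.reindex[OF ins_inj]) (simp add: o_def)
  also have "\<dots> = (\<Sum>w\<in>W m n. \<Sum>j\<in>{0..dp w}. T m k (dp (ins m (Suc n) (w,j))))"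
  proof -
    have eq: "(\<lambda>p. T m k (dp (ins m (Suc n) p))) = (\<lambda>(w,j). T m k (dp (ins m (Suc n) (w,j))))" by auto
    show ?thesis unfolding eq by (rule sum.Sigma[symmetric]) (simp_all add: W_finite)
  qed
  also have "\<dots> = (\<Sum>w\<in>W m n. \<Sum>j\<in>{0..dp w}. if j = 0 then T m k (m + dp w) else T m k (m - 1 + j))"
  proof (rule sum.cong[OF refl], rule sum.cong[OF refl])
    fix w j assume "w \<in> W m n" "j \<in> {0..dp w}"
    then show "T m k (dp (ins m (Suc n) (w,j))) = (if j = 0 then T m k (m + dp w) else T m k (m - 1 + j))"
      using ins_dp[OF m] by simp
  qed
  also have "\<dots> = (\<Sum>w\<in>W m n. T m (Suc k) (dp w))"
    by (rule sum.cong[OF refl]) (simp add: inner[OF m, of "T m k"] add.commute)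
  also have "\<dots> = T m (n + Suc k) 0" using Suc.IH[OF m] .
  finally show ?case by simp
qed

definition D :: "nat \<Rightarrow> nat \<Rightarrow> nat \<Rightarrow> int" where
  "D m k L = int (((m+1)*k+L) choose k) - int m * (if k = 0 then 0 else int (((m+1)*k+L) choose (k-1)))"

lemma absorb: "Suc k * (A choose Suc k) = (A - k) * (A choose k)"
proof (cases A)
  case 0 then show ?thesis by simp
next
  case (Suc A')
  have "Suc k * (Suc A' choose Suc k) = Suc A' * (A' choose k)" by (rule Suc_times_binomial)
  also have "\<dots> = (Suc A' - k) * (Suc A' choose k)" using binomial_absorb_comp[of "Suc A'" k] by simp
  finally show ?thesis using Suc by simp
qed

lemma pas: "int (Suc B choose k) = int (B choose k) + (if k = 0 then 0 else int (B choose (k-1)))"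
  by (cases k) auto

lemma T_rec0: "T m (Suc k) 0 = T m k m" by simp

lemma T_recS: "T m (Suc k) (Suc L) = T m (Suc k) L + T m k (m + Suc L)"
  by simp

lemma D0: "D m 0 L = 1" unfolding D_def by simp

lemma D_rec0:
  assumes m: "m \<ge> 1"
  shows "D m (Suc k) 0 = D m k m"
proof -
  define A where "A = (m+1)*k + m"
  have e1: "(m+1)*Suc k + 0 = Suc A" unfolding A_def by simp
  have e2: "(m+1)*k + m = A" unfolding A_def by simp
  have ab: "Suc k * (A choose Suc k) = (A - k) * (A choose k)" by (rule absorb)
  have "A - k = m * Suc k" unfolding A_def by (simp add: algebra_simps)
  then have "Suc k * (A choose Suc k) = Suc k * (m * (A choose k))" using ab by (simp add: algebra_simps)
  then have key: "A choose Suc k = m * (A choose k)" by (metis Zero_not_Suc mult_left_cancel)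
  have "D m (Suc k) 0 = int (Suc A choose Suc k) - int m * int (Suc A choose k)"
    unfolding D_def e1 by simp
  also have "\<dots> = int (A choose k) + int (A choose Suc k) - int m * (int (A choose k) + (if k = 0 then 0 else int (A choose (k-1))))"
    using pas[of A k] by simp
  also have "\<dots> = int (A choose k) - int m * (if k = 0 then 0 else int (A choose (k-1)))"
    using key by (simp add: algebra_simps)
  also have "\<dots> = D m k m" unfolding D_def e2 by simp
  finally show ?thesis .
qed

lemma D_recS: "D m (Suc k) (Suc L) = D m (Suc k) L + D m k (m + Suc L)"
proof -
  define B where "B = (m+1)*Suc k + L"
  have e1: "(m+1)*Suc k + Suc L = Suc B" unfolding B_def by simp
  have e2: "(m+1)*k + (m + Suc L) = B" unfolding B_def by simp
  have "D m (Suc k) (Suc L) = int (Suc B choose Suc k) - int m * int (Suc B choose k)"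
    unfolding D_def e1 by simp
  also have "\<dots> = int (B choose k) + int (B choose Suc k) - int m * (int (B choose k) + (if k = 0 then 0 else int (B choose (k-1))))"
    using pas[of B k] by simp
  also have "\<dots> = (int (B choose Suc k) - int m * int (B choose k)) + (int (B choose k) - int m * (if k = 0 then 0 else int (B choose (k-1))))"
    by (simp add: algebra_simps)
  also have "\<dots> = D m (Suc k) L + D m k (m + Suc L)" unfolding D_def e2 B_def by simp
  finally show ?thesis .
qed

lemma T_D: "m \<ge> 1 \<Longrightarrow> int (T m k L) = D m k L"
proof (induction k arbitrary: L)
  case 0 then show ?case by (simp add: D0)
next
  case (Suc k)
  note IHk = Suc.IH[OF Suc.prems] and m = Suc.prems
  show ?case
  proof (induction L)
    case 0 then show ?case using IHk D_rec0[OF m] by simp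
  next
    case (Suc L)
    have "int (T m (Suc k) (Suc L)) = int (T m (Suc k) L) + int (T m k (m + Suc L))"
      using T_recS by simp
    also have "\<dots> = D m (Suc k) L + D m k (m + Suc L)" using Suc IHk by simp
    also have "\<dots> = D m (Suc k) (Suc L)" using D_recS by simp
    finally show ?case .
  qed
qed

lemma s_eq: "m \<ge> 1 \<Longrightarrow> s_count n m {[1,2,2],[1,2,3]} = T m n 0"
proof -
  assume m: "m \<ge> 1"
  have "{w. multiperm n m w \<and> avoids_all w {[1,2,2],[1,2,3]}} = W m n"
    unfolding W_def using avoids_good by auto
  then have "s_count n m {[1,2,2],[1,2,3]} = card (W m n)" unfolding s_count_def by simp
  also have "\<dots> = (\<Sum>w\<in>W m n. T m 0 (dp w))" by simp
  also have "\<dots> = T m n 0" using main[OF m, where n=n and k=0] by simp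
  finally show ?thesis .
qed

lemma nat_eq:
  assumes m: "m \<ge> 1"
  shows "s_count n m {[1,2,2],[1,2,3]} * (m * n + 1) = ((m + 1) * n) choose n"
proof -
  define N where "N = (m+1)*n"
  have sD: "int (s_count n m {[1,2,2],[1,2,3]}) = D m n 0" using s_eq[OF m] T_D[OF m] by simp
  have "D m n 0 * int (m*n+1) = int (N choose n)"
  proof (cases n)
    case 0 then show ?thesis unfolding D_def N_def by simp
  next
    case (Suc n')
    have ab: "Suc n' * (N choose Suc n') = (N - n') * (N choose n')" by (rule absorb)
    have "N - n' = m * n + 1" unfolding N_def using Suc by (simp add: algebra_simps)
    then have ab2: "int n * int (N choose n) = int (m*n+1) * int (N choose n')" using ab Suc
      by (metis of_nat_mult)
    have "D m n 0 = int (N choose n) - int m * int (N choose n')" unfolding D_def N_def using Suc by simp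
    then have "D m n 0 * int (m*n+1) = (int (N choose n) - int m * int (N choose n')) * int (m*n+1)"
      by simp
    also have "\<dots> = int (N choose n) * int (m*n+1) - int m * (int (m*n+1) * int (N choose n'))"
      by (simp add: algebra_simps)
    also have "\<dots> = int (N choose n) * int (m*n+1) - int m * (int n * int (N choose n))" using ab2 by simp
    also have "\<dots> = int (N choose n)" by (simp add: algebra_simps)
    finally show ?thesis .
  qed
  moreover have "int (s_count n m {[1,2,2],[1,2,3]} * (m * n + 1)) = int (s_count n m {[1,2,2],[1,2,3]}) * int (m * n + 1)"
    by (rule of_nat_mult)
  ultimately have "int (s_count n m {[1,2,2],[1,2,3]} * (m * n + 1)) = int (N choose n)" by (simp only: sD)
  then show ?thesis unfolding N_def by (simp only: of_nat_eq_iff)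
qed

theorem theorem4:
  fixes n m :: nat
  assumes "m \<ge> 1"
  shows "(of_nat (s_count n m {[1,2,2], [1,2,3]}) :: rat)
           = of_nat (((m + 1) * n) choose n) / of_nat (m * n + 1)"
proof -
  have "(of_nat (s_count n m {[1,2,2], [1,2,3]}) :: rat) * of_nat (m * n + 1) = of_nat (((m + 1) * n) choose n)"
    using nat_eq[OF assms] by (metis of_nat_mult)
  then show ?thesis by (simp add: eq_divide_eq del: of_nat_Suc)
qed

end
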